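(* Let $n\ge2$, let $P=(p_{ij})$ be an $n\times n$ checkerboard copula and $\mathbf{p}=\mathrm{vec}(P)$. Then $$1-\mathrm{tr}(\Xi P\Xi P^\top)=1-\mathbf{p}^\top W\mathbf{p}=\mathbf{p}^\top(V\otimes V)\mathbf{p}.$$
   Context: An $n\times n$ checkerboard copula is a real $n\times n$ matrix with nonnegative entries whose row and column sums all equal $\frac1n$. $\Xi=(\xi_{ij})$ with $\xi_{ij}=1$ if $i=j$, $2$ if $i>j$, $0$ if $i<j$. $J_n$ is the $n\times n$ all-ones matrix and $V=\Xi-J_n$. $\mathrm{vec}(P)=(p_{11},p_{12},\dots,p_{1n},p_{21},\dots,p_{nn})^\top$ (row-major order). $W=\frac12(\Xi\otimes\Xi^\top+\Xi^\top\otimes\Xi)$, where $\otimes$ is the Kronecker product. *)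

theory Defs
  imports Complex_Main
begin

text \<open>Matrices are represented as functions nat => nat => real, with indices 0-based and
  restricted by explicit bounds (entries outside the index range are irrelevant).
  Index i (0-based) corresponds to index i+1 of the paper, so the order relation on
  indices is preserved.\<close>

type_synonym rmat = "nat \<Rightarrow> nat \<Rightarrow> real"
type_synonym rvec = "nat \<Rightarrow> real"

definition checkerboard_copula :: "nat \<Rightarrow> rmat \<Rightarrow> bool" where
  "checkerboard_copula n P \<longleftrightarrow>
     (\<forall>i<n. \<forall>j<n. 0 \<le> P i j) \<and>
     (\<forall>i<n. (\<Sum>j<n. P i j) = 1 / real n) \<and>
     (\<forall>j<n. (\<Sum>i<n. P i j) = 1 / real n)"

definition Xi :: rmat where
  "Xi i j = (if i = j then 1 else if i > j then 2 else 0)"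

definition Jall :: rmat where
  "Jall i j = 1"

definition Vmat :: rmat where
  "Vmat i j = Xi i j - Jall i j"

definition mmult :: "nat \<Rightarrow> rmat \<Rightarrow> rmat \<Rightarrow> rmat" where
  "mmult n A B i j = (\<Sum>k<n. A i k * B k j)"

definition mtrans :: "rmat \<Rightarrow> rmat" where
  "mtrans A i j = A j i"

definition mtrace :: "nat \<Rightarrow> rmat \<Rightarrow> real" where
  "mtrace n A = (\<Sum>i<n. A i i)"

definition vec_rm :: "nat \<Rightarrow> rmat \<Rightarrow> rvec" where
  "vec_rm n P I = P (I div n) (I mod n)"

definition kron :: "nat \<Rightarrow> rmat \<Rightarrow> rmat \<Rightarrow> rmat" where
  "kron m A B I J = A (I div m) (J div m) * B (I mod m) (J mod m)"

definition Wmat :: "nat \<Rightarrow> rmat" where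
  "Wmat n I J = (1/2) * (kron n Xi (mtrans Xi) I J + kron n (mtrans Xi) Xi I J)"

definition qform :: "nat \<Rightarrow> rvec \<Rightarrow> rmat \<Rightarrow> real" where
  "qform N x M = (\<Sum>I<N. \<Sum>J<N. x I * M I J * x J)"

end

theory Submission imports Defs begin

lemma sum_grp: "(\<Sum>I<m*n. g I) = (\<Sum>i<m. \<Sum>k<n. g (i*n+k))" for g :: "nat \<Rightarrow> real"
proof (induction m)
  case 0 then show ?case by simp
next
  case (Suc m)
  have "{..<Suc m * n} = {..<m*n} \<union> {m*n..<m*n+n}" by auto
  then have "(\<Sum>I<Suc m*n. g I) = (\<Sum>I<m*n. g I) + (\<Sum>I\<in>{m*n..<m*n+n}. g I)"
    by (simp add: sum.union_disjoint ivl_disj_int)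
  also have "(\<Sum>I\<in>{m*n..<m*n+n}. g I) = (\<Sum>k<n. g (m*n+k))"
    using sum.shift_bounds_nat_ivl[of g 0 "m*n" n] by (simp add: lessThan_atLeast0 add.commute)
  finally show ?case using Suc by simp
qed

lemma qf: "qform (n*n) (vec_rm n P) M = (\<Sum>i<n. \<Sum>k<n. \<Sum>j<n. \<Sum>l<n. P i k * M (i*n+k) (j*n+l) * P j l)"
  unfolding qform_def vec_rm_def
  by (simp add: sum_grp sum_distrib_left sum_distrib_right)

lemma kr: "k < n \<Longrightarrow> l < n \<Longrightarrow> kron n A B (i*n+k) (j*n+l) = A i j * B k l"
  unfolding kron_def by simp

lemma xs: "Xi a b + Xi b a = 2" unfolding Xi_def by auto

lemma swap4: "(\<Sum>i<n. \<Sum>k<n. \<Sum>j<n. \<Sum>l<n. f i k j l) = (\<Sum>j<n. \<Sum>l<n. \<Sum>i<n. \<Sum>k<n. f i k j l)" for f :: "nat \<Rightarrow> nat \<Rightarrow> nat \<Rightarrow> nat \<Rightarrow> real"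
proof -
  have "(\<Sum>i<n. \<Sum>k<n. \<Sum>j<n. \<Sum>l<n. f i k j l) = (\<Sum>i<n. \<Sum>j<n. \<Sum>k<n. \<Sum>l<n. f i k j l)"
    by (rule sum.cong[OF refl], rule sum.swap)
  also have "\<dots> = (\<Sum>j<n. \<Sum>i<n. \<Sum>k<n. \<Sum>l<n. f i k j l)" by (rule sum.swap)
  also have "\<dots> = (\<Sum>j<n. \<Sum>i<n. \<Sum>l<n. \<Sum>k<n. f i k j l)"
    by (rule sum.cong[OF refl], rule sum.cong[OF refl], rule sum.swap)
  also have "\<dots> = (\<Sum>j<n. \<Sum>l<n. \<Sum>i<n. \<Sum>k<n. f i k j l)"
    by (rule sum.cong[OF refl], rule sum.swap)
  finally show ?thesis .
qed

theorem lemma1: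
  fixes n :: nat and P :: "nat \<Rightarrow> nat \<Rightarrow> real"
  assumes "n \<ge> 2" and "checkerboard_copula n P"
  shows "1 - mtrace n (mmult n (mmult n (mmult n Xi P) Xi) (mtrans P))
           = 1 - qform (n*n) (vec_rm n P) (Wmat n)
       \<and> 1 - qform (n*n) (vec_rm n P) (Wmat n)
           = qform (n*n) (vec_rm n P) (kron n Vmat Vmat)"
proof -
  define c where "c = 1 / real n"
  have row: "\<And>i. i < n \<Longrightarrow> (\<Sum>k<n. P i k) = c" using assms(2) unfolding checkerboard_copula_def c_def by auto
  have col: "\<And>k. k < n \<Longrightarrow> (\<Sum>i<n. P i k) = c" using assms(2) unfolding checkerboard_copula_def c_def by auto
  have nc: "real n * c = 1" using assms(1) unfolding c_def by simp
  define Q1 where "Q1 = (\<Sum>i<n. \<Sum>k<n. \<Sum>j<n. \<Sum>l<n. P i k * (Xi i j * Xi l k) * P j l)"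
  define Q2 where "Q2 = (\<Sum>i<n. \<Sum>k<n. \<Sum>j<n. \<Sum>l<n. P i k * (Xi j i * Xi k l) * P j l)"
  define QV where "QV = (\<Sum>i<n. \<Sum>k<n. \<Sum>j<n. \<Sum>l<n. P i k * (Vmat i j * Vmat k l) * P j l)"
  have hV: "qform (n*n) (vec_rm n P) (kron n Vmat Vmat) = QV"
    unfolding qf QV_def by (intro sum.cong refl) (simp add: kr)
  have hW: "qform (n*n) (vec_rm n P) (Wmat n) = (Q1 + Q2) / 2"
  proof -
    have "qform (n*n) (vec_rm n P) (Wmat n) = (\<Sum>i<n. \<Sum>k<n. \<Sum>j<n. \<Sum>l<n.
       (P i k * (Xi i j * Xi l k) * P j l + P i k * (Xi j i * Xi k l) * P j l) / 2)"
      unfolding qf Wmat_def by (intro sum.cong refl) (simp add: kron_def mtrans_def algebra_simps)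
    also have "\<dots> = (Q1 + Q2) / 2"
      unfolding Q1_def Q2_def by (simp only: sum_divide_distrib[symmetric] sum.distrib)
    finally show ?thesis .
  qed
  have hT: "mtrace n (mmult n (mmult n (mmult n Xi P) Xi) (mtrans P)) = Q1"
  proof -
    have "mtrace n (mmult n (mmult n (mmult n Xi P) Xi) (mtrans P))
        = (\<Sum>i<n. \<Sum>k<n. \<Sum>l<n. \<Sum>j<n. P i k * (Xi i j * Xi l k) * P j l)"
      unfolding mtrace_def mmult_def mtrans_def
      by (simp add: sum_distrib_left sum_distrib_right algebra_simps)
    also have "\<dots> = Q1" unfolding Q1_def
      by (rule sum.cong[OF refl], rule sum.cong[OF refl], rule sum.swap)
    finally show ?thesis .
  qed
  have h12: "Q2 = Q1"
    unfolding Q2_def Q1_def by (subst swap4) (simp add: algebra_simps)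
  define A where "A = (\<Sum>i<n. \<Sum>k<n. \<Sum>j<n. \<Sum>l<n. P i k * P j l * Xi i j)"
  define B where "B = (\<Sum>i<n. \<Sum>k<n. \<Sum>j<n. \<Sum>l<n. P i k * P j l * Xi k l)"
  define T where "T = (\<Sum>i<n. \<Sum>k<n. \<Sum>j<n. \<Sum>l<n. P i k * P j l)"
  have "Q1 + QV = A - B + T"
  proof -
    have "Q1 + QV = (\<Sum>i<n. \<Sum>k<n. \<Sum>j<n. \<Sum>l<n. P i k * P j l * Xi i j - P i k * P j l * Xi k l + P i k * P j l)"
      unfolding Q1_def QV_def sum.distrib[symmetric]
    proof (intro sum.cong refl)
      fix i k j l
      have h: "Xi l k = 2 - Xi k l" using xs[of l k] by simp
      show "P i k * (Xi i j * Xi l k) * P j l + P i k * (Vmat i j * Vmat k l) * P j l =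
         P i k * P j l * Xi i j - P i k * P j l * Xi k l + P i k * P j l"
        unfolding Vmat_def Jall_def h by (simp add: algebra_simps)
    qed
    then show ?thesis unfolding A_def B_def T_def by (simp add: sum.distrib sum_subtractf)
  qed
  have hA: "A = (\<Sum>i<n. \<Sum>j<n. Xi i j * c * c)"
  proof -
    have "A = (\<Sum>i<n. \<Sum>k<n. \<Sum>j<n. P i k * Xi i j * (\<Sum>l<n. P j l))"
      unfolding A_def by (simp add: sum_distrib_left algebra_simps)
    also have "\<dots> = (\<Sum>i<n. \<Sum>k<n. \<Sum>j<n. P i k * Xi i j * c)"
      by (intro sum.cong refl) (simp add: row)
    also have "\<dots> = (\<Sum>i<n. \<Sum>j<n. \<Sum>k<n. P i k * Xi i j * c)"
      by (rule sum.cong[OF refl], rule sum.swap)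
    also have "\<dots> = (\<Sum>i<n. \<Sum>j<n. Xi i j * c * (\<Sum>k<n. P i k))"
      by (simp add: sum_distrib_left algebra_simps)
    also have "\<dots> = (\<Sum>i<n. \<Sum>j<n. Xi i j * c * c)"
      by (intro sum.cong refl) (simp add: row)
    finally show ?thesis .
  qed
  have hB: "B = (\<Sum>k<n. \<Sum>l<n. Xi k l * c * c)"
  proof -
    have "B = (\<Sum>i<n. \<Sum>k<n. P i k * (\<Sum>l<n. Xi k l * (\<Sum>j<n. P j l)))"
      unfolding B_def by (simp add: sum_distrib_left sum_distrib_right algebra_simps) (rule sum.cong[OF refl], rule sum.cong[OF refl], rule sum.swap)
    also have "\<dots> = (\<Sum>i<n. \<Sum>k<n. P i k * (\<Sum>l<n. Xi k l * c))"
      by (intro sum.cong refl) (simp add: col)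
    also have "\<dots> = (\<Sum>k<n. \<Sum>i<n. P i k * (\<Sum>l<n. Xi k l * c))"
      by (rule sum.swap)
    also have "\<dots> = (\<Sum>k<n. (\<Sum>l<n. Xi k l * c) * (\<Sum>i<n. P i k))"
      by (rule sum.cong[OF refl]) (metis sum_distrib_right mult.commute)
    also have "\<dots> = (\<Sum>k<n. \<Sum>l<n. Xi k l * c * c)"
      by (intro sum.cong refl) (simp add: col sum_distrib_right)
    finally show ?thesis .
  qed
  have hTT: "T = 1"
  proof -
    have "T = (\<Sum>i<n. \<Sum>k<n. P i k * (\<Sum>j<n. \<Sum>l<n. P j l))"
      unfolding T_def by (simp add: sum_distrib_left)
    also have "\<dots> = (\<Sum>i<n. \<Sum>k<n. P i k * (real n * c))"
      by (simp add: row)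
    also have "\<dots> = real n * c * (real n * c)"
      by (simp add: row sum_distrib_right[symmetric] mult.commute)
    finally show ?thesis using nc by simp
  qed
  show ?thesis using hT hW h12 hV \<open>Q1 + QV = A - B + T\<close> hA hB hTT by simp
qed

end
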